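(* Fix real $R_1,R_2\ge1$. For a prime $\ell$ and real $N\ge1$, let $\mathcal{C}'_\ell(N,R_1,R_2)$ be the set of triples $(a,b,c)\in\mathcal{R}_{\mathbb{Z}^3}(N,R_1,R_2)$ that are not $\ell$-carefree. Then \[ \frac{\#\mathcal{C}'_\ell(N,R_1,R_2)}{N}=O\Big(\ell^{-4/3}+\frac1{\sqrt N}\Big), \] with implied constant depending only on $R_1,R_2$ (not on $N$ or $\ell$).
   Context: $\mathcal{R}_{\mathbb{Z}^3}(N,R_1,R_2)=\{(a,b,c)\in\mathbb{Z}_{\ge1}^3:\ ab^{2/3}c<N,\ a/c\in[1,R_1],\ b\in[1,R_2]\}$. A triple $(a,b,c)$ of positive integers is $\ell$-carefree if $\ell^2\nmid ab$, $\ell^2\nmid bc$ and $\ell^2\nmid ca$. *)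

theory Defs
  imports Complex_Main "HOL-Computational_Algebra.Primes"
begin

definition region_Z3 :: "real \<Rightarrow> real \<Rightarrow> real \<Rightarrow> (nat \<times> nat \<times> nat) set" where
  "region_Z3 N R1 R2 = {(a, b, c). a \<ge> 1 \<and> b \<ge> 1 \<and> c \<ge> 1 \<and>
      real a * real b powr (2/3) * real c < N \<and>
      1 \<le> real a / real c \<and> real a / real c \<le> R1 \<and>
      1 \<le> real b \<and> real b \<le> R2}"

definition carefree :: "nat \<Rightarrow> nat \<times> nat \<times> nat \<Rightarrow> bool" where
  "carefree l t = (case t of (a, b, c) \<Rightarrow>
      \<not> l^2 dvd a * b \<and> \<not> l^2 dvd b * c \<and> \<not> l^2 dvd c * a)"

definition not_carefree_set :: "nat \<Rightarrow> real \<Rightarrow> real \<Rightarrow> real \<Rightarrow> (nat \<times> nat \<times> nat) set" where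
  "not_carefree_set l N R1 R2 = {t \<in> region_Z3 N R1 R2. \<not> carefree l t}"

end

theory Submission
  imports Defs
begin

lemma region_bounds:
  assumes "(a,b,c) \<in> region_Z3 N R1 R2" "R1 \<ge> 1"
  shows "1 \<le> a \<and> 1 \<le> b \<and> 1 \<le> c \<and> real b \<le> R2 \<and> real c \<le> sqrt N \<and> real a \<le> sqrt (R1*N)"
proof -
  have h: "a \<ge> 1" "b \<ge> 1" "c \<ge> 1" "real a * real b powr (2/3) * real c < N"
    "1 \<le> real a / real c" "real a / real c \<le> R1" "real b \<le> R2"
    using assms unfolding region_Z3_def by auto
  have cpos: "real c > 0" using h by simp
  have "real b powr (2/3) \<ge> 1" using h by (simp add: ge_one_powr_ge_zero)
  hence "real a * real c \<le> real a * real b powr (2/3) * real c"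
    using h by (simp add: mult_right_mono mult_left_mono)
  hence ac: "real a * real c < N" using h by linarith
  have ca: "real c \<le> real a" using h cpos by (simp add: le_divide_eq)
  have aR: "real a \<le> R1 * real c" using h cpos by (simp add: divide_le_eq)
  have "(real c)^2 \<le> real a * real c" using ca cpos by (simp add: power2_eq_square)
  hence "(real c)^2 \<le> N" using ac by linarith
  hence c1: "real c \<le> sqrt N" by (rule real_le_rsqrt)
  have "(real a)^2 \<le> R1 * real c * real a" using aR h by (simp add: power2_eq_square mult_right_mono)
  also have "\<dots> = R1 * (real a * real c)" by simp
  also have "\<dots> \<le> R1 * N" using ac assms(2) by (intro mult_left_mono) auto
  finally have a1: "real a \<le> sqrt (R1*N)" by (rule real_le_rsqrt)
  show ?thesis using h c1 a1 by auto
qed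

lemma nat_floor_mem:
  assumes "(x::nat) \<ge> 1" "real x \<le> r"
  shows "x \<in> {1..nat \<lfloor>r\<rfloor>}"
  using assms by (auto simp: le_nat_floor)

lemma nat_floor_le:
  assumes "r \<ge> 0" shows "real (nat \<lfloor>r\<rfloor>) \<le> r"
  using assms by simp

lemma count_pq:
  fixes p q :: nat
  assumes "p > 0" "q > 0" "N \<ge> 1" "R1 \<ge> 1" "R2 \<ge> 1"
  shows "real (card {t \<in> region_Z3 N R1 R2. p dvd fst t \<and> q dvd snd (snd t)})
          \<le> sqrt R1 * R2 * N / (real p * real q)"
proof -
  let ?S = "{t \<in> region_Z3 N R1 R2. p dvd fst t \<and> q dvd snd (snd t)}"
  define f where "f = (\<lambda>(a::nat,b::nat,c::nat). (a div p, b, c div q))"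
  define X where "X = nat \<lfloor>sqrt (R1*N) / p\<rfloor>"
  define Y where "Y = nat \<lfloor>R2\<rfloor>"
  define Z where "Z = nat \<lfloor>sqrt N / q\<rfloor>"
  have inj: "inj_on f ?S"
  proof (rule inj_onI)
    fix x y assume "x \<in> ?S" "y \<in> ?S" "f x = f y"
    then show "x = y" unfolding f_def
    proof (cases x; cases y)
      fix a b c a' b' c'
      assume "x \<in> ?S" "y \<in> ?S" and e: "(case x of (a, b, c) \<Rightarrow> (a div p, b, c div q)) = (case y of (a, b, c) \<Rightarrow> (a div p, b, c div q))"
        and xy: "x = (a, b, c)" "y = (a', b', c')"
      then have d: "p dvd a" "p dvd a'" "q dvd c" "q dvd c'" by auto
      from e xy have e2: "a div p = a' div p" "b = b'" "c div q = c' div q" by auto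
      have "a = a'" by (metis d(1,2) e2(1) dvd_mult_div_cancel)
      moreover have "c = c'" by (metis d(3,4) e2(3) dvd_mult_div_cancel)
      ultimately show "x = y" using xy e2 by simp
    qed
  qed
  have img: "f ` ?S \<subseteq> {1..X} \<times> {1..Y} \<times> {1..Z}"
  proof
    fix y assume "y \<in> f ` ?S"
    then obtain a b c where t: "(a,b,c) \<in> region_Z3 N R1 R2" "p dvd a" "q dvd c" and y: "y = f (a,b,c)"
      by auto
    from region_bounds[OF t(1) assms(4)] have B: "1 \<le> a" "1 \<le> b" "1 \<le> c" "real b \<le> R2"
      "real c \<le> sqrt N" "real a \<le> sqrt (R1*N)" by auto
    obtain i where i: "a = p * i" using t(2) by (auto elim: dvdE)
    obtain j where j: "c = q * j" using t(3) by (auto elim: dvdE)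
    have i1: "i \<ge> 1" using B i by (cases i) auto
    have j1: "j \<ge> 1" using B j by (cases j) auto
    have "real p * real i \<le> sqrt (R1*N)" using B i by simp
    hence "real i \<le> sqrt (R1*N) / p" using assms(1) by (simp add: le_divide_eq mult.commute)
    hence "i \<in> {1..X}" unfolding X_def by (rule nat_floor_mem[OF i1])
    moreover have "real q * real j \<le> sqrt N" using B j by simp
    hence "real j \<le> sqrt N / q" using assms(2) by (simp add: le_divide_eq mult.commute)
    hence "j \<in> {1..Z}" unfolding Z_def by (rule nat_floor_mem[OF j1])
    moreover have "b \<in> {1..Y}" unfolding Y_def using B by (intro nat_floor_mem) auto
    ultimately show "y \<in> {1..X} \<times> {1..Y} \<times> {1..Z}" using y i j assms(1,2) unfolding f_def by auto
  qed
  have "card ?S \<le> card ({1..X} \<times> {1..Y} \<times> {1..Z})"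
    by (rule card_inj_on_le[OF inj img]) auto
  also have "\<dots> = X * Y * Z" by (simp add: card_cartesian_product)
  finally have "real (card ?S) \<le> real (X * Y * Z)" by (simp only: of_nat_le_iff)
  hence "real (card ?S) \<le> real X * real Y * real Z" by (simp only: of_nat_mult)
  also have "\<dots> \<le> (sqrt (R1*N) / p) * R2 * (sqrt N / q)"
    unfolding X_def Y_def Z_def using assms
    by (intro mult_mono nat_floor_le) auto
  also have "\<dots> = sqrt R1 * R2 * N / (real p * real q)"
    using assms by (simp add: real_sqrt_mult field_simps)
  finally show ?thesis .
qed

lemma finite_region:
  assumes "R1 \<ge> 1" shows "finite (region_Z3 N R1 R2)"
proof -
  have "region_Z3 N R1 R2 \<subseteq> {..nat \<lfloor>sqrt (R1*N)\<rfloor>} \<times> {..nat \<lfloor>R2\<rfloor>} \<times> {..nat \<lfloor>sqrt N\<rfloor>}"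
  proof
    fix t assume "t \<in> region_Z3 N R1 R2"
    then obtain a b c where t: "t = (a,b,c)" "(a,b,c) \<in> region_Z3 N R1 R2" by (cases t) auto
    from region_bounds[OF t(2) assms] show "t \<in> {..nat \<lfloor>sqrt (R1*N)\<rfloor>} \<times> {..nat \<lfloor>R2\<rfloor>} \<times> {..nat \<lfloor>sqrt N\<rfloor>}"
      using t(1) by (auto simp: le_nat_floor)
  qed
  thus ?thesis by (rule finite_subset) auto
qed

theorem lemma4p1:
  fixes R1 R2 :: real
  assumes "R1 \<ge> 1" and "R2 \<ge> 1"
  shows "\<exists>C>0. \<forall>(l::nat) (N::real). prime l \<longrightarrow> N \<ge> 1 \<longrightarrow>
           real (card (not_carefree_set l N R1 R2)) / N
             \<le> C * (real l powr (-4/3) + 1 / sqrt N)"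
proof -
  define K where "K = sqrt R1 * R2"
  have Kpos: "K > 0" using assms unfolding K_def by simp
  define C where "C = K * R2 powr (4/3) + 3 * K"
  have Cpos: "C > 0" using Kpos assms unfolding C_def by (simp add: add_pos_nonneg)
  show ?thesis
  proof (intro exI[of _ C] conjI allI impI Cpos)
    fix l :: nat and N :: real
    assume lp: "prime l" and N1: "N \<ge> 1"
    have l1: "l \<ge> 2" using lp prime_ge_2_nat by blast
    let ?S = "\<lambda>p q. {t \<in> region_Z3 N R1 R2. p dvd fst t \<and> q dvd snd (snd t)}"
    have fin: "finite (?S p q)" for p q using finite_region[OF assms(1)] by auto
    have lpow_pos: "real l powr (-4/3) > 0" using l1 by simp
    have rhs: "C * real l powr (-4/3) \<le> C * (real l powr (-4/3) + 1 / sqrt N)"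
      using Cpos N1 by (intro mult_left_mono) auto
    have main: "real (card (not_carefree_set l N R1 R2)) / N \<le> C * real l powr (-4/3)"
    proof (cases "real l \<le> R2")
      case True
      have "not_carefree_set l N R1 R2 \<subseteq> ?S 1 1" unfolding not_carefree_set_def by auto
      hence "card (not_carefree_set l N R1 R2) \<le> card (?S 1 1)" by (intro card_mono fin)
      also have "real (card (?S 1 1)) \<le> K * N" using count_pq[of 1 1 N R1 R2] assms N1 unfolding K_def by simp
      finally have "real (card (not_carefree_set l N R1 R2)) / N \<le> K" using N1 by (simp add: divide_le_eq)
      also have "K = K * R2 powr (4/3) * R2 powr (-4/3)" using assms
        by (simp add: powr_minus field_simps)
      also have "\<dots> \<le> K * R2 powr (4/3) * real l powr (-4/3)"
        using True l1 Kpos by (intro mult_left_mono powr_mono2') auto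
      also have "\<dots> \<le> C * real l powr (-4/3)" unfolding C_def using lpow_pos Kpos
        by (intro mult_right_mono) auto
      finally show ?thesis .
    next
      case False
      have nb: "\<not> l dvd b" if "(a,b,c) \<in> region_Z3 N R1 R2" for a b c
      proof
        assume "l dvd b"
        moreover have "b \<ge> 1" "real b \<le> R2" using region_bounds[OF that assms(1)] by auto
        ultimately have "l \<le> b" by (intro dvd_imp_le) auto
        thus False using False \<open>real b \<le> R2\<close> by simp
      qed
      have cop: "coprime (l^2) x" if "\<not> l dvd x" for x
        using that lp by (simp add: prime_imp_coprime)
      have sub: "not_carefree_set l N R1 R2 \<subseteq> ?S (l^2) 1 \<union> ?S 1 (l^2) \<union> ?S l l"
      proof
        fix t assume tin: "t \<in> not_carefree_set l N R1 R2"
        then obtain a b c where t: "t = (a,b,c)" "(a,b,c) \<in> region_Z3 N R1 R2"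
          "l^2 dvd a*b \<or> l^2 dvd b*c \<or> l^2 dvd c*a"
          unfolding not_carefree_set_def carefree_def by (cases t) auto
        have cb: "coprime (l^2) b" using cop nb[OF t(2)] by blast
        have "l^2 dvd a \<or> l^2 dvd c \<or> (l dvd a \<and> l dvd c)"
        proof -
          { assume "l^2 dvd a*b" hence "l^2 dvd a" using cb by (simp add: coprime_dvd_mult_left_iff) }
          moreover
          { assume "l^2 dvd b*c" hence "l^2 dvd c" using cb by (simp add: coprime_dvd_mult_right_iff) }
          moreover
          { assume h: "l^2 dvd c*a" "\<not> (l dvd a \<and> l dvd c)"
            then have "l^2 dvd a \<or> l^2 dvd c"
              using cop[of a] cop[of c] by (auto simp: coprime_dvd_mult_left_iff coprime_dvd_mult_right_iff) }
          ultimately show ?thesis using t(3) by blast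
        qed
        thus "t \<in> ?S (l^2) 1 \<union> ?S 1 (l^2) \<union> ?S l l" using t by auto
      qed
      have "card (not_carefree_set l N R1 R2) \<le> card (?S (l^2) 1 \<union> ?S 1 (l^2) \<union> ?S l l)"
        by (rule card_mono[OF _ sub]) (simp only: finite_Un fin)
      also have "\<dots> \<le> card (?S (l^2) 1) + card (?S 1 (l^2)) + card (?S l l)"
        by (meson add_mono card_Un_le le_trans order_refl)
      finally have "real (card (not_carefree_set l N R1 R2)) \<le>
          real (card (?S (l^2) 1)) + real (card (?S 1 (l^2))) + real (card (?S l l))" by linarith
      also have "\<dots> \<le> K*N/(real l)^2 + K*N/(real l)^2 + K*N/(real l)^2"
        using count_pq[of "l^2" 1 N R1 R2] count_pq[of 1 "l^2" N R1 R2] count_pq[of l l N R1 R2]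
          assms N1 l1 unfolding K_def by (intro add_mono) (auto simp: power2_eq_square)
      finally have "real (card (not_carefree_set l N R1 R2)) / N \<le> 3 * K / (real l)^2"
        using N1 by (simp add: divide_le_eq field_simps)
      also have "(real l)^2 = real l powr 2" using l1 by (simp add: powr_realpow)
      also have "3 * K / real l powr 2 = 3 * K * real l powr (-2)" by (simp add: powr_minus divide_inverse)
      also have "\<dots> \<le> 3 * K * real l powr (-4/3)" using l1 Kpos by (intro mult_left_mono powr_mono) auto
      also have "\<dots> \<le> C * real l powr (-4/3)" unfolding C_def using lpow_pos Kpos assms
        by (intro mult_right_mono) auto
      finally show ?thesis .
    qed
    show "real (card (not_carefree_set l N R1 R2)) / N \<le> C * (real l powr (-4/3) + 1 / sqrt N)"
      using main rhs by linarith
  qed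
qed

end
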